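(* Let $\Gamma=\bigcup_i\gamma_i$ be an admissible finite collection of transverse unobstructed curves in $\Sigma$ and let $u\in C_2^+(\Sigma;\mathbb{R})$. Then $(u+H_{\mathbb{R}})\cap C_2^+(\Sigma;\mathbb{R})$ is compact.
   Context: $\Sigma$ is a closed oriented surface of genus at least two; unobstructed curves are oriented immersed closed curves whose lifts to the universal cover are properly embedded lines. $C=C_2(\Sigma;\mathbb{Z})$ is the free $\mathbb{Z}$-module with basis the connected components of $\Sigma\setminus\Gamma$, $C_2(\Sigma;\mathbb{R})=C\otimes\mathbb{R}$, and $C_2^+(\Sigma;\mathbb{R})$ is the cone of elements with all coordinates nonnegative. The Euler measure $e(S)$ of a surface with corners is $\frac{1}{2\pi}$ times the integral of the curvature of a metric for which the boundary is geodesic and corners are right angles; it extends to a linear form $e$ on $C$. $H\subset C$ is the subgroup of $2$-chains in $\ker e$ whose boundary is a linear combination of the $\gamma_i$, and $H_{\mathbb{R}}$ is its $\mathbb{R}$-span. $\Gamma$ is admissible iff every nonzero $b\in H$ has both positive and negative coordinates. *)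

theory Defs
  imports "HOL-Analysis.Analysis"
begin

text \<open>Abstract cellular model of the complement of \<Gamma> in \<Sigma>.
  'r : the (finitely many) connected components (regions) of \<Sigma> minus \<Gamma>;
       integer 2-chains C = C_2(\<Sigma>;Z) are functions 'r => int, real 2-chains
       C_2(\<Sigma>;R) are vectors real^'r.
  'e : the edges of the cell structure induced by \<Gamma>; integer 1-chains are 'e => int.
  bd r ed : coefficient of edge ed in the (oriented) boundary of region r.
  gam i : the 1-chain carried by the oriented curve \<gamma>_i.
  eul r : Euler measure e of region r.\<close>

definition bdry :: "('r::finite \<Rightarrow> 'e \<Rightarrow> int) \<Rightarrow> ('r \<Rightarrow> int) \<Rightarrow> 'e \<Rightarrow> int" where
  "bdry bd b = (\<lambda>ed. \<Sum>r\<in>UNIV. b r * bd r ed)"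

definition euler :: "('r::finite \<Rightarrow> real) \<Rightarrow> ('r \<Rightarrow> int) \<Rightarrow> real" where
  "euler eul b = (\<Sum>r\<in>UNIV. real_of_int (b r) * eul r)"

definition Hgrp :: "('r::finite \<Rightarrow> real) \<Rightarrow> ('r \<Rightarrow> 'e \<Rightarrow> int) \<Rightarrow> ('i::finite \<Rightarrow> 'e \<Rightarrow> int)
    \<Rightarrow> ('r \<Rightarrow> int) set" where
  "Hgrp eul bd gam = {b. euler eul b = 0 \<and>
      (\<exists>c :: 'i \<Rightarrow> int. bdry bd b = (\<lambda>ed. \<Sum>i\<in>UNIV. c i * gam i ed))}"

definition to_real_chain :: "('r::finite \<Rightarrow> int) \<Rightarrow> real^'r" where
  "to_real_chain b = (\<chi> r. real_of_int (b r))"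

definition HR :: "('r::finite \<Rightarrow> real) \<Rightarrow> ('r \<Rightarrow> 'e \<Rightarrow> int) \<Rightarrow> ('i::finite \<Rightarrow> 'e \<Rightarrow> int)
    \<Rightarrow> (real^'r) set" where
  "HR eul bd gam = span (to_real_chain ` Hgrp eul bd gam)"

definition C2plus :: "(real^'r::finite) set" where
  "C2plus = {x. \<forall>r. 0 \<le> x $ r}"

definition admissible :: "('r::finite \<Rightarrow> real) \<Rightarrow> ('r \<Rightarrow> 'e \<Rightarrow> int) \<Rightarrow> ('i::finite \<Rightarrow> 'e \<Rightarrow> int)
    \<Rightarrow> bool" where
  "admissible eul bd gam \<longleftrightarrow>
     (\<forall>b\<in>Hgrp eul bd gam. b \<noteq> (\<lambda>_. 0) \<longrightarrow> (\<exists>r. 0 < b r) \<and> (\<exists>r. b r < 0))"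

end

theory Submission
  imports Defs
begin

lemma rat_approx:
  fixes I :: "'v set"
  assumes "finite I"
  shows "\<forall>(E::('v \<Rightarrow> real) set) (lam::'v\<Rightarrow>real) (e::real). (\<forall>a\<in>E. \<forall>v\<in>I. a v \<in> \<rat>) \<longrightarrow> (\<forall>a\<in>E. (\<Sum>v\<in>I. a v * lam v) = 0) \<longrightarrow> e > 0 \<longrightarrow>
     (\<exists>mu. (\<forall>v\<in>I. mu v \<in> \<rat> \<and> \<bar>mu v - lam v\<bar> < e) \<and> (\<forall>a\<in>E. (\<Sum>v\<in>I. a v * mu v) = 0))"
  using assms
proof (induction I rule: finite_induct)
  case empty
  then show ?case by auto
next
  case (insert j I)
  show ?case
  proof (intro allI impI)
    fix E :: "('v \<Rightarrow> real) set" and lam :: "'v \<Rightarrow> real" and e :: real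
    assume rat: "\<forall>a\<in>E. \<forall>v\<in>insert j I. a v \<in> \<rat>"
      and eqs: "\<forall>a\<in>E. (\<Sum>v\<in>insert j I. a v * lam v) = 0" and e: "e > 0"
    show "\<exists>mu. (\<forall>v\<in>insert j I. mu v \<in> \<rat> \<and> \<bar>mu v - lam v\<bar> < e) \<and> (\<forall>a\<in>E. (\<Sum>v\<in>insert j I. a v * mu v) = 0)"
    proof (cases "\<exists>a0\<in>E. a0 j \<noteq> 0")
      case False
      have eqs': "\<forall>a\<in>E. (\<Sum>v\<in>I. a v * lam v) = 0"
        using eqs False insert.hyps by (metis (no_types, lifting) add_0 mult_zero_left sum.insert)
      have ratI: "\<forall>a\<in>E. \<forall>v\<in>I. a v \<in> \<rat>" using rat by auto
      have "\<exists>mu. (\<forall>v\<in>I. mu v \<in> \<rat> \<and> \<bar>mu v - lam v\<bar> < e) \<and> (\<forall>a\<in>E. (\<Sum>v\<in>I. a v * mu v) = 0)"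
        using insert.IH ratI eqs' e by blast
      then obtain mu where
        mu: "\<forall>v\<in>I. mu v \<in> \<rat> \<and> \<bar>mu v - lam v\<bar> < e" "\<forall>a\<in>E. (\<Sum>v\<in>I. a v * mu v) = 0"
        by auto
      obtain q where q: "q \<in> \<rat>" "lam j < q" "q < lam j + e"
        using Rats_dense_in_real[of "lam j" "lam j + e"] e by auto
      define mu' where "mu' = mu(j := q)"
      have s: "(\<Sum>v\<in>I. a v * mu' v) = (\<Sum>v\<in>I. a v * mu v)" for a
        unfolding mu'_def using insert.hyps by (intro sum.cong) auto
      show ?thesis
        apply (rule exI[of _ mu'])
        using mu q s False insert.hyps by (auto simp: mu'_def)
    next
      case True
      then obtain a0 where a0: "a0 \<in> E" "a0 j \<noteq> 0" by auto
      define E' where "E' = (\<lambda>a. \<lambda>v. a v - (a j / a0 j) * a0 v) ` E"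
      have rat': "\<forall>a\<in>E'. \<forall>v\<in>I. a v \<in> \<rat>"
        using rat a0 unfolding E'_def by (auto intro!: Rats_diff Rats_mult Rats_divide)
      have eqs': "\<forall>a\<in>E'. (\<Sum>v\<in>I. a v * lam v) = 0"
      proof
        fix a' assume "a' \<in> E'"
        then obtain a where a: "a \<in> E" "a' = (\<lambda>v. a v - (a j / a0 j) * a0 v)" unfolding E'_def by auto
        have s1: "(\<Sum>v\<in>I. a v * lam v) = - a j * lam j" using eqs a insert.hyps by auto
        have s2: "(\<Sum>v\<in>I. a0 v * lam v) = - a0 j * lam j" using eqs a0 insert.hyps by auto
        have "(\<Sum>v\<in>I. a' v * lam v) = (\<Sum>v\<in>I. a v * lam v) - (a j / a0 j) * (\<Sum>v\<in>I. a0 v * lam v)"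
          unfolding a by (simp add: algebra_simps sum_subtractf sum_distrib_left)
        also have "\<dots> = 0" using s1 s2 a0 by simp
        finally show "(\<Sum>v\<in>I. a' v * lam v) = 0" .
      qed
      define M where "M = (\<Sum>v\<in>I. \<bar>a0 v\<bar>) / \<bar>a0 j\<bar>"
      have M0: "M \<ge> 0" unfolding M_def by (simp add: sum_nonneg)
      define e' where "e' = e / (1 + M)"
      have e': "e' > 0" "e' \<le> e" "M * e' < e" using e M0 unfolding e'_def
        by (auto simp: field_simps)
      have "\<exists>mu. (\<forall>v\<in>I. mu v \<in> \<rat> \<and> \<bar>mu v - lam v\<bar> < e') \<and> (\<forall>a\<in>E'. (\<Sum>v\<in>I. a v * mu v) = 0)"
        using insert.IH rat' eqs' e'(1) by blast
      then obtain mu where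
        mu: "\<forall>v\<in>I. mu v \<in> \<rat> \<and> \<bar>mu v - lam v\<bar> < e'" "\<forall>a\<in>E'. (\<Sum>v\<in>I. a v * mu v) = 0"
        by auto
      define q where "q = - (\<Sum>v\<in>I. a0 v * mu v) / a0 j"
      define mu' where "mu' = mu(j := q)"
      have s: "(\<Sum>v\<in>I. a v * mu' v) = (\<Sum>v\<in>I. a v * mu v)" for a
        unfolding mu'_def using insert.hyps by (intro sum.cong) auto
      have qrat: "q \<in> \<rat>" unfolding q_def using rat a0 mu(1)
        by (auto intro!: Rats_divide Rats_sum Rats_mult)
      have lamj: "lam j = - (\<Sum>v\<in>I. a0 v * lam v) / a0 j"
        using eqs a0 insert.hyps by (auto simp: field_simps)
      have d: "q - lam j = - (\<Sum>v\<in>I. a0 v * (mu v - lam v)) / a0 j"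
        unfolding q_def lamj right_diff_distrib sum_subtractf by (simp add: diff_divide_distrib)
      have "\<bar>q - lam j\<bar> = \<bar>\<Sum>v\<in>I. a0 v * (mu v - lam v)\<bar> / \<bar>a0 j\<bar>"
        unfolding d by (simp add: abs_divide)
      also have "\<dots> \<le> (\<Sum>v\<in>I. \<bar>a0 v\<bar> * e') / \<bar>a0 j\<bar>"
      proof (rule divide_right_mono)
        have "\<bar>\<Sum>v\<in>I. a0 v * (mu v - lam v)\<bar> \<le> (\<Sum>v\<in>I. \<bar>a0 v * (mu v - lam v)\<bar>)" by (rule sum_abs)
        also have "\<dots> \<le> (\<Sum>v\<in>I. \<bar>a0 v\<bar> * e')"
          using mu(1) by (intro sum_mono) (metis abs_ge_zero abs_mult less_imp_le mult_left_mono)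
        finally show "\<bar>\<Sum>v\<in>I. a0 v * (mu v - lam v)\<bar> \<le> (\<Sum>v\<in>I. \<bar>a0 v\<bar> * e')" .
      qed simp
      also have "\<dots> = M * e'" unfolding M_def by (simp add: sum_distrib_right)
      also have "\<dots> < e" by (rule e'(3))
      finally have qe: "\<bar>q - lam j\<bar> < e" .
      have fin: "\<forall>a\<in>E. (\<Sum>v\<in>insert j I. a v * mu' v) = 0"
      proof
        fix a assume a: "a \<in> E"
        have "(\<lambda>v. a v - (a j / a0 j) * a0 v) \<in> E'" unfolding E'_def using a by auto
        with mu(2) have "(\<Sum>v\<in>I. (a v - (a j / a0 j) * a0 v) * mu v) = 0" by auto
        hence "(\<Sum>v\<in>I. a v * mu v) = (a j / a0 j) * (\<Sum>v\<in>I. a0 v * mu v)"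
          by (simp add: algebra_simps sum_subtractf sum_distrib_left)
        also have "\<dots> = - a j * q" unfolding q_def using a0 by (simp add: field_simps)
        finally have "(\<Sum>v\<in>I. a v * mu v) = - a j * q" .
        then show "(\<Sum>v\<in>insert j I. a v * mu' v) = 0"
          using insert.hyps s[of a] by (simp add: mu'_def)
      qed
      show ?thesis
        apply (rule exI[of _ mu'])
        using mu(1) e' qe qrat fin insert.hyps by (auto simp: mu'_def)
    qed
  qed
qed


lemma H_lin:
  assumes "a \<in> Hgrp eul bd gam" "b \<in> Hgrp eul bd gam"
  shows "(\<lambda>r. k * a r + b r) \<in> Hgrp eul bd gam"
proof -
  from assms obtain ca cb where ea: "euler eul a = 0" and ba: "bdry bd a = (\<lambda>ed. \<Sum>i\<in>UNIV. ca i * gam i ed)"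
    and eb: "euler eul b = 0" and bb: "bdry bd b = (\<lambda>ed. \<Sum>i\<in>UNIV. cb i * gam i ed)"
    unfolding Hgrp_def by auto
  have "euler eul (\<lambda>r. k * a r + b r) = real_of_int k * euler eul a + euler eul b"
    unfolding euler_def by (simp add: sum.distrib sum_distrib_left algebra_simps)
  hence e: "euler eul (\<lambda>r. k * a r + b r) = 0" using ea eb by simp
  have bd: "bdry bd (\<lambda>r. k * a r + b r) = (\<lambda>ed. \<Sum>i\<in>UNIV. (k * ca i + cb i) * gam i ed)"
  proof
    fix ed
    have 1: "(\<Sum>r\<in>UNIV. a r * bd r ed) = (\<Sum>i\<in>UNIV. ca i * gam i ed)"
      using fun_cong[OF ba, of ed] unfolding bdry_def by simp
    have 2: "(\<Sum>r\<in>UNIV. b r * bd r ed) = (\<Sum>i\<in>UNIV. cb i * gam i ed)"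
      using fun_cong[OF bb, of ed] unfolding bdry_def by simp
    have "bdry bd (\<lambda>r. k * a r + b r) ed = k * (\<Sum>r\<in>UNIV. a r * bd r ed) + (\<Sum>r\<in>UNIV. b r * bd r ed)"
      unfolding bdry_def by (simp add: sum.distrib sum_distrib_left algebra_simps)
    also have "\<dots> = (\<Sum>i\<in>UNIV. (k * ca i + cb i) * gam i ed)"
      unfolding 1 2 by (simp add: sum.distrib sum_distrib_left algebra_simps)
    finally show "bdry bd (\<lambda>r. k * a r + b r) ed = (\<Sum>i\<in>UNIV. (k * ca i + cb i) * gam i ed)" .
  qed
  show ?thesis unfolding Hgrp_def mem_Collect_eq
    by (rule conjI[OF e exI[of _ "\<lambda>i. k * ca i + cb i"]]) (rule bd)
qed

lemma H_zero: "(\<lambda>_. 0) \<in> Hgrp eul bd gam"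
  unfolding Hgrp_def euler_def bdry_def
  by (auto intro!: exI[of _ "\<lambda>_. 0"])

lemma H_sum:
  assumes "finite B" "\<forall>b\<in>B. h b \<in> Hgrp eul bd gam"
  shows "(\<lambda>r. \<Sum>b\<in>B. m b * h b r) \<in> Hgrp eul bd gam"
  using assms
proof (induction B rule: finite_induct)
  case empty
  then show ?case using H_zero by simp
next
  case (insert x B)
  have "(\<lambda>r. \<Sum>b\<in>insert x B. m b * h b r) = (\<lambda>r. m x * h x r + (\<Sum>b\<in>B. m b * h b r))"
    using insert.hyps by simp
  then show ?case using H_lin[of "h x" eul bd gam "\<lambda>r. \<Sum>b\<in>B. m b * h b r" "m x"] insert by simp
qed

lemma denom:
  assumes "finite B" "\<forall>b\<in>B. f b \<in> \<rat>"
  shows "\<exists>N::nat. N > 0 \<and> (\<forall>b\<in>B. real N * f b \<in> \<int>)"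
  using assms
proof (induction B rule: finite_induct)
  case empty
  then show ?case by (auto intro!: exI[of _ 1])
next
  case (insert x B)
  then obtain N where N: "N > 0" "\<forall>b\<in>B. real N * f b \<in> \<int>" by auto
  from insert.prems have "f x \<in> \<rat>" by auto
  then obtain p q where pq: "q > 0" "f x = of_int p / of_int q" by (rule Rats_cases')
  define N' where "N' = N * nat q"
  have "N' > 0" unfolding N'_def using N pq by simp
  moreover have "\<forall>b\<in>B. real N' * f b \<in> \<int>"
  proof
    fix b assume "b \<in> B"
    have "real N' * f b = real (nat q) * (real N * f b)" unfolding N'_def by simp
    then show "real N' * f b \<in> \<int>" using N \<open>b \<in> B\<close> by (metis Ints_mult Ints_of_nat)
  qed
  moreover have "real N' * f x \<in> \<int>"
  proof -
    have "real N' * f x = real N * of_int p" unfolding N'_def pq using pq(1) by simp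
    then show ?thesis by simp
  qed
  ultimately show ?case by auto
qed



lemma HR_pos_zero:
  fixes x :: "real^'r::finite"
    and eul :: "'r \<Rightarrow> real" and bd :: "'r \<Rightarrow> 'e::finite \<Rightarrow> int" and gam :: "'i::finite \<Rightarrow> 'e \<Rightarrow> int"
  assumes adm: "admissible eul bd gam" and xH: "x \<in> HR eul bd gam" and pos: "\<forall>r. 0 \<le> x $ r"
  shows "x = 0"
proof (rule ccontr)
  assume x0: "x \<noteq> 0"
  let ?H = "Hgrp eul bd gam"
  let ?V = "to_real_chain ` ?H"
  obtain B where B: "B \<subseteq> ?V" "independent B" "?V \<subseteq> span B"
    by (rule maximal_independent_subset)
  have finB: "finite B" using independent_bound_general[OF B(2)] by simp
  have "x \<in> span B" using xH B(3) unfolding HR_def by (meson span_minimal subspace_span subsetD)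
  then obtain lam where lam: "x = (\<Sum>v\<in>B. lam v *\<^sub>R v)" using span_finite[OF finB] by auto
  have xc: "x $ r = (\<Sum>b\<in>B. b $ r * lam b)" for r
    unfolding lam sum_component by (simp add: mult.commute)
  have "\<forall>b\<in>B. \<exists>k. k \<in> ?H \<and> b = to_real_chain k" using B(1) by blast
  then obtain h where h: "\<forall>b\<in>B. h b \<in> ?H \<and> b = to_real_chain (h b)"
    by metis
  have bint: "b $ r \<in> \<int>" if "b \<in> B" for b r
    using h that unfolding to_real_chain_def by (metis Ints_of_int vec_lambda_beta)
  define S where "S = {r. x $ r > 0}"
  have Sne: "S \<noteq> {}"
  proof
    assume "S = {}"
    hence "\<forall>r. x $ r = 0" using pos unfolding S_def by (auto simp: less_le)
    hence "x = 0" by (simp add: vec_eq_iff)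
    with x0 show False by simp
  qed
  define m where "m = Min ((\<lambda>r. x $ r) ` S)"
  have finS: "finite S" by simp
  have mpos: "m > 0" unfolding m_def using Sne finS by (simp add: S_def)
  have mle: "m \<le> x $ r" if "r \<in> S" for r unfolding m_def using that finS by simp
  define K where "K = 1 + (\<Sum>r\<in>UNIV. \<Sum>b\<in>B. \<bar>b $ r\<bar>)"
  have Kr: "(\<Sum>b\<in>B. \<bar>b $ r\<bar>) \<le> K - 1" for r
    unfolding K_def by (simp, intro member_le_sum) (auto intro: sum_nonneg)
  have K1: "K \<ge> 1" unfolding K_def by (simp add: sum_nonneg)
  define e where "e = m / K"
  have epos: "e > 0" unfolding e_def using mpos K1 by simp
  define E where "E = (\<lambda>r. \<lambda>b::real^'r. b $ r) ` {r. x $ r = 0}"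
  have ratE: "\<forall>a\<in>E. \<forall>v\<in>B. a v \<in> \<rat>" unfolding E_def using bint
    by (auto simp: Ints_subset_Rats[THEN subsetD])
  have eqE: "\<forall>a\<in>E. (\<Sum>v\<in>B. a v * lam v) = 0" unfolding E_def using xc by auto
  obtain mu where mu: "\<forall>v\<in>B. mu v \<in> \<rat> \<and> \<bar>mu v - lam v\<bar> < e" "\<forall>a\<in>E. (\<Sum>v\<in>B. a v * mu v) = 0"
    using rat_approx[OF finB, THEN spec, THEN spec, THEN spec, THEN mp, THEN mp, THEN mp, OF ratE eqE epos] by blast
  define y where "y = (\<lambda>r. \<Sum>b\<in>B. b $ r * mu b)"
  have y0: "y r = 0" if "x $ r = 0" for r
    using mu(2) that unfolding y_def E_def by auto
  have ypos: "y r > 0" if "r \<in> S" for r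
  proof -
    have "\<bar>y r - x $ r\<bar> = \<bar>\<Sum>b\<in>B. b $ r * (mu b - lam b)\<bar>"
      unfolding y_def xc by (simp add: sum_subtractf right_diff_distrib)
    also have "\<dots> \<le> (\<Sum>b\<in>B. \<bar>b $ r * (mu b - lam b)\<bar>)" by (rule sum_abs)
    also have "\<dots> \<le> (\<Sum>b\<in>B. \<bar>b $ r\<bar> * e)"
      using mu(1) by (intro sum_mono) (metis abs_ge_zero abs_mult less_imp_le mult_left_mono)
    also have "\<dots> = e * (\<Sum>b\<in>B. \<bar>b $ r\<bar>)" by (simp add: sum_distrib_left mult.commute)
    also have "\<dots> \<le> e * (K - 1)" using Kr epos by (simp add: mult_left_mono)
    also have "\<dots> < e * K" using epos by simp
    also have "\<dots> = m" unfolding e_def using K1 by simp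
    also have "\<dots> \<le> x $ r" using mle that by simp
    finally show ?thesis by linarith
  qed
  have ynn: "y r \<ge> 0" for r
  proof (cases "x $ r = 0")
    case True then show ?thesis using y0 by simp
  next
    case False then have "r \<in> S" using pos unfolding S_def by (simp add: less_le)
    then show ?thesis using ypos by (simp add: less_imp_le)
  qed
  obtain N :: nat where N: "N > 0" "\<forall>b\<in>B. real N * mu b \<in> \<int>"
    using denom[OF finB, of mu] mu(1) by blast
  have "\<forall>b\<in>B. \<exists>k. real N * mu b = of_int k" using N(2) by (metis Ints_cases)
  then obtain mi where mi: "\<forall>b\<in>B. real N * mu b = of_int (mi b)" by metis
  define z where "z = (\<lambda>r. \<Sum>b\<in>B. mi b * h b r)"
  have zH: "z \<in> ?H" unfolding z_def using H_sum[OF finB] h by blast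
  have zr: "real_of_int (z r) = real N * y r" for r
  proof -
    have "real_of_int (z r) = (\<Sum>b\<in>B. real_of_int (mi b) * real_of_int (h b r))"
      unfolding z_def by simp
    also have "\<dots> = (\<Sum>b\<in>B. real N * mu b * b $ r)"
    proof (rule sum.cong)
      fix b assume b: "b \<in> B"
      have "b $ r = real_of_int (h b r)" using h b unfolding to_real_chain_def
        by (metis vec_lambda_beta)
      then show "real_of_int (mi b) * real_of_int (h b r) = real N * mu b * b $ r"
        using mi b by simp
    qed simp
    also have "\<dots> = real N * y r" unfolding y_def by (simp add: sum_distrib_left algebra_simps)
    finally show ?thesis .
  qed
  obtain r0 where r0: "r0 \<in> S" using Sne by auto
  have "z r0 > 0" using zr[of r0] ypos[OF r0] N(1) by (metis mult_pos_pos of_int_0_less_iff of_nat_0_less_iff)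
  hence "z \<noteq> (\<lambda>_. 0)" by auto
  then obtain r where "z r < 0" using adm zH unfolding admissible_def by blast
  moreover have "z r \<ge> 0" using zr[of r] ynn[of r] by (metis of_int_0_le_iff of_nat_0_le_iff mult_nonneg_nonneg)
  ultimately show False by simp
qed



theorem proposition3p4:
  fixes eul :: "'r::finite \<Rightarrow> real"
    and bd :: "'r \<Rightarrow> 'e::finite \<Rightarrow> int"
    and gam :: "'i::finite \<Rightarrow> 'e \<Rightarrow> int"
    and u :: "real^'r"
  assumes "admissible eul bd gam"
    and "u \<in> C2plus"
  shows "compact ((\<lambda>h. u + h) ` HR eul bd gam \<inter> C2plus)"
proof -
  let ?HR = "HR eul bd gam"
  have subHR: "subspace ?HR" unfolding HR_def by (rule subspace_span)
  have clHR: "closed ?HR" using subHR by (rule closed_subspace)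
  have cl1: "closed ((\<lambda>h. u + h) ` ?HR)" using closed_translation[OF clHR, of u] by simp
  have cl2: "closed (C2plus :: (real^'r) set)" unfolding C2plus_def by (rule closed_positive_orthant)
  have upos: "\<forall>r. 0 \<le> u $ r" using assms(2) unfolding C2plus_def by simp
  define T where "T = ?HR \<inter> sphere 0 1"
  have cT: "compact T" unfolding T_def by (rule closed_Int_compact[OF clHR compact_sphere])
  define g where "g = (\<lambda>d::real^'r. \<Sum>r\<in>UNIV. min 0 (d $ r))"
  have gneg: "g d < 0" if "d \<in> T" for d
  proof (cases "\<forall>r. 0 \<le> d $ r")
    case True
    then have "d = 0" using HR_pos_zero[OF assms(1)] that unfolding T_def by blast
    then show ?thesis using that unfolding T_def by simp
  next
    case False
    then obtain r where r: "d $ r < 0" by (auto simp: not_le)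
    have "g d = min 0 (d $ r) + (\<Sum>r'\<in>UNIV - {r}. min 0 (d $ r'))"
      unfolding g_def by (simp add: sum.remove)
    also have "\<dots> \<le> min 0 (d $ r)"
    proof -
      have "(\<Sum>r'\<in>UNIV - {r}. min 0 (d $ r')) \<le> 0" by (rule sum_nonpos) simp
      then show ?thesis by linarith
    qed
    also have "\<dots> < 0" using r by simp
    finally show ?thesis .
  qed
  have contg: "continuous_on T g" unfolding g_def by (intro continuous_intros)
  obtain \<delta> where \<delta>: "\<delta> > 0" "\<forall>d\<in>T. g d \<le> - \<delta>"
  proof (cases "T = {}")
    case True then show ?thesis using that[of 1] by simp
  next
    case False
    then obtain d0 where d0: "d0 \<in> T" "\<forall>d\<in>T. g d \<le> g d0"
      using continuous_attains_sup[OF cT False contg] by blast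
    show ?thesis using that[of "- g d0"] d0 gneg[OF d0(1)] by simp
  qed
  define R where "R = (\<Sum>r\<in>UNIV. u $ r) / \<delta>"
  have hb: "norm h \<le> R" if h: "h \<in> ?HR" "\<forall>r. 0 \<le> (u + h) $ r" for h
  proof (cases "h = 0")
    case True then show ?thesis unfolding R_def using \<delta> upos by (simp add: sum_nonneg)
  next
    case False
    then have nh: "norm h > 0" by simp
    define d where "d = (1 / norm h) *\<^sub>R h"
    have "d \<in> T" unfolding T_def d_def using h(1) nh
      by (auto intro: subspace_scale[OF subHR])
    then have gd: "g d \<le> - \<delta>" using \<delta> by blast
    have pw: "min 0 (t / norm h) = min 0 t / norm h" for t
      using nh by (cases "t \<le> 0") (auto simp: min_def divide_le_0_iff zero_le_divide_iff)
    have "g d = g h / norm h" unfolding g_def d_def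
      by (simp add: sum_divide_distrib pw)
    hence gh: "g h \<le> - \<delta> * norm h" using gd nh by (simp add: field_simps)
    have "- (\<Sum>r\<in>UNIV. u $ r) \<le> g h" unfolding g_def sum_negf[symmetric]
      using h(2) upos by (intro sum_mono) (smt (verit) vector_add_component)
    with gh have "\<delta> * norm h \<le> (\<Sum>r\<in>UNIV. u $ r)" by simp
    then show ?thesis unfolding R_def using \<delta> by (simp add: field_simps)
  qed
  have bnd: "bounded ((\<lambda>h. u + h) ` ?HR \<inter> C2plus)"
    unfolding bounded_iff
  proof (intro exI ballI)
    fix x assume "x \<in> (\<lambda>h. u + h) ` ?HR \<inter> C2plus"
    then obtain h where h: "h \<in> ?HR" "x = u + h" "\<forall>r. 0 \<le> (u + h) $ r"
      unfolding C2plus_def by auto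
    have "norm x \<le> norm u + norm h" unfolding h(2) by (rule norm_triangle_ineq)
    also have "\<dots> \<le> norm u + R" using hb[OF h(1) h(3)] by simp
    finally show "norm x \<le> norm u + R" .
  qed
  show ?thesis using bnd closed_Int[OF cl1 cl2] by (simp add: compact_eq_bounded_closed)
qed

end
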